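(* If $F:\mathbb{R}\to\mathbb{R}$ is a Darboux function which is continuous at only countably many points, then there is a non-constant continuous function $f:\mathbb{R}\to\mathbb{R}$ such that $F+f$ is Darboux.
   Context: A function $F:\mathbb{R}\to\mathbb{R}$ is Darboux if the image under $F$ of every interval is an interval. *)

theory Defs
  imports "HOL-Analysis.Analysis"
begin

definition darboux :: "(real \<Rightarrow> real) \<Rightarrow> bool" where
  "darboux F \<longleftrightarrow> (\<forall>I::real set. is_interval I \<longrightarrow> is_interval (F ` I))"

end

theory Submission
  imports Defs "HOL-Analysis.Analysis"
begin

definition DD :: "(real \<Rightarrow> real) \<Rightarrow> real \<Rightarrow> real \<Rightarrow> bool" where
  "DD F x v \<longleftrightarrow> (\<exists>h>0. \<forall>a b. x - h \<le> a \<longrightarrow> a < b \<longrightarrow> b \<le> x + h \<longrightarrow> v \<in> F ` {a<..<b})"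

definition QQ :: "(real \<Rightarrow> real) \<Rightarrow> real \<Rightarrow> real \<Rightarrow> real \<Rightarrow> bool" where
  "QQ F r s k \<longleftrightarrow> (\<forall>v. min r (F k) < v \<longrightarrow> v < max s (F k) \<longrightarrow> DD F k v)"

lemma darbouxD:
  assumes "darboux F" "p \<le> q" "min (F p) (F q) \<le> y" "y \<le> max (F p) (F q)"
  shows "\<exists>z. p \<le> z \<and> z \<le> q \<and> F z = y"
proof -
  have "is_interval (F ` {p..q})" using assms(1) by (simp add: darboux_def is_interval_cc)
  moreover have "F p \<in> F ` {p..q}" "F q \<in> F ` {p..q}" using assms(2) by auto
  ultimately have "y \<in> F ` {p..q}" using assms(3,4) unfolding is_interval_1
    by (cases "F p \<le> F q") (auto simp: min_def max_def split: if_splits)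
  then show ?thesis by auto
qed

lemma darboux_open_interval:
  assumes "darboux F" "v1 \<in> F ` {a<..<b}" "v2 \<in> F ` {a<..<b}" "v1 \<le> v" "v \<le> v2"
  shows "v \<in> F ` {a<..<b}"
proof -
  have "is_interval (F ` {a<..<b})" using assms(1) by (simp add: darboux_def is_interval_oo)
  then show ?thesis using assms unfolding is_interval_1 by blast
qed

lemma shift_aux:
  fixes a b c y :: real
  assumes "min (a + c) (b + c) \<le> y" "y \<le> max (a + c) (b + c)"
  shows "min a b \<le> y - c" "y - c \<le> max a b"
  using assms unfolding min_def max_def by (auto split: if_splits)

lemma between_aux:
  fixes a b c d y :: real
  assumes "min a d \<le> y" "y \<le> max a d" "\<not> (min a b \<le> y \<and> y \<le> max a b)" "\<not> (min c d \<le> y \<and> y \<le> max c d)"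
  shows "(b < y \<and> y < c) \<or> (c < y \<and> y < b)"
  using assms unfolding min_def max_def by (auto split: if_splits)
lemma T_aux:
  fixes r s F1 F2 y f1 f2 :: real
  assumes "\<bar>f1 - f2\<bar> < s - r" "(F1 + f1 < y \<and> y < F2 + f2) \<or> (F2 + f2 < y \<and> y < F1 + f1)"
  shows "(min r F1 < y - f1 \<and> y - f1 < max s F1) \<or> (min r F2 < y - f2 \<and> y - f2 < max s F2)"
proof -
  have o: "f1 - f2 < s - r" "f2 - f1 < s - r" using assms(1) by (simp_all add: abs_less_iff)
  have m: "min r F1 \<le> F1" "min r F1 \<le> r" "F1 \<le> max s F1" "s \<le> max s F1"
          "min r F2 \<le> F2" "min r F2 \<le> r" "F2 \<le> max s F2" "s \<le> max s F2" by auto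
  show ?thesis
  proof (rule ccontr)
    assume "\<not> ?thesis"
    then have n1: "y - f1 \<le> min r F1 \<or> max s F1 \<le> y - f1"
      and n2: "y - f2 \<le> min r F2 \<or> max s F2 \<le> y - f2" by (auto simp del: min_less_iff_conj less_max_iff_disj)
    from assms(2) n1 n2 o m show False by linarith
  qed
qed

context
  fixes F f :: "real \<Rightarrow> real" and K :: "real set" and r s :: real
  assumes dF: "darboux F"
    and cf: "continuous_on UNIV f"
    and osc: "\<forall>x y. \<bar>f x - f y\<bar> < s - r"
    and Kc: "closed K"
    and Kgap: "\<forall>a b. a < b \<longrightarrow> (\<exists>w. a < w \<and> w < b \<and> w \<notin> K)"
    and Kconst: "\<forall>a b. a \<le> b \<longrightarrow> {a<..<b} \<inter> K = {} \<longrightarrow> f a = f b"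
    and KQ: "\<forall>k\<in>K. QQ F r s k"
begin

lemma hit:
  assumes "DD F k v1" "DD F k v2" "v1 < y - f k" "y - f k < v2"
  shows "\<exists>e>0. \<forall>c d. c < d \<longrightarrow> k - e \<le> c \<longrightarrow> d \<le> k + e \<longrightarrow> (\<exists>z. c < z \<and> z < d \<and> F z + f z = y)"
proof -
  obtain h1 where h1: "h1 > 0" "\<forall>a b. k - h1 \<le> a \<longrightarrow> a < b \<longrightarrow> b \<le> k + h1 \<longrightarrow> v1 \<in> F ` {a<..<b}"
    using assms(1) unfolding DD_def by blast
  obtain h2 where h2: "h2 > 0" "\<forall>a b. k - h2 \<le> a \<longrightarrow> a < b \<longrightarrow> b \<le> k + h2 \<longrightarrow> v2 \<in> F ` {a<..<b}"
    using assms(2) unfolding DD_def by blast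
  define \<eta> where "\<eta> = min (y - f k - v1) (v2 - (y - f k))"
  have eta: "\<eta> > 0" using assms(3,4) by (simp add: \<eta>_def)
  have "continuous (at k) f" using cf by (simp add: continuous_on_eq_continuous_at)
  then have "\<forall>e>0. \<exists>d>0. \<forall>x. dist x k < d \<longrightarrow> dist (f x) (f k) < e"
    by (simp only: continuous_at_eps_delta)
  then obtain \<delta> where \<delta>: "\<delta> > 0" "\<forall>x. dist x k < \<delta> \<longrightarrow> dist (f x) (f k) < \<eta>"
    using eta by blast
  define e where "e = min (min h1 h2) (\<delta>/2)"
  have e: "e > 0" using h1 h2 \<delta> by (simp add: e_def)
  show ?thesis
  proof (rule exI[of _ e], intro conjI e allI impI)
    fix c d assume cd: "c < d" "k - e \<le> c" "d \<le> k + e"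
    obtain w where w: "c < w" "w < d" "w \<notin> K" using Kgap cd(1) by blast
    have "open (- K)" using Kc by (simp add: open_Compl)
    then have "\<exists>\<rho>>0. ball w \<rho> \<subseteq> - K" using open_contains_ball_eq[of "-K" w] w(3) by simp
    then obtain \<rho> where \<rho>: "\<rho> > 0" "ball w \<rho> \<subseteq> - K" by blast
    define a' where "a' = max c (w - \<rho>)"
    define b' where "b' = min d (w + \<rho>)"
    have ab': "a' < w" "w < b'" using w \<rho> by (auto simp: a'_def b'_def)
    have disj: "{a'<..<b'} \<inter> K = {}"
    proof -
      have "{a'<..<b'} \<subseteq> ball w \<rho>" by (auto simp: a'_def b'_def dist_real_def)
      then show ?thesis using \<rho>(2) by blast
    qed
    have ca: "c \<le> a'" by (simp add: a'_def)
    have bd: "b' \<le> d" by (simp add: b'_def)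
    have eh: "e \<le> h1" "e \<le> h2" "e \<le> \<delta>/2" by (simp_all add: e_def)
    have ab'': "a' < b'" using ab' by linarith
    have "k - h1 \<le> a'" "b' \<le> k + h1" "k - h2 \<le> a'" "b' \<le> k + h2"
      using ca bd eh cd by linarith+
    then have "v1 \<in> F ` {a'<..<b'}" "v2 \<in> F ` {a'<..<b'}"
      using h1(2) h2(2) ab'' by blast+
    moreover have "v1 < y - f w \<and> y - f w < v2"
    proof -
      have "w - k < \<delta>" "k - w < \<delta>" using cd w eh \<delta>(1) by linarith+
      then have "dist w k < \<delta>" unfolding dist_real_def by (simp add: abs_less_iff)
      then have "\<bar>f w - f k\<bar> < \<eta>" using \<delta>(2) by (simp add: dist_real_def)
      then show ?thesis unfolding \<eta>_def by auto
    qed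
    ultimately have "y - f w \<in> F ` {a'<..<b'}"
      using darboux_open_interval[OF dF, of v1 a' b' v2 "y - f w"] by simp
    then obtain z where z: "a' < z" "z < b'" "F z = y - f w" by auto
    have "f z = f w"
    proof -
      have "{min z w<..<max z w} \<subseteq> {a'<..<b'}" using z ab' by auto
      then have "{min z w<..<max z w} \<inter> K = {}" using disj by blast
      then have "f (min z w) = f (max z w)" using Kconst by auto
      then show ?thesis by (cases "z \<le> w") (auto simp: min_def max_def)
    qed
    then show "\<exists>z. c < z \<and> z < d \<and> F z + f z = y"
      using z ca bd by (intro exI[of _ z]) simp
  qed
qed

lemma hitT:
  assumes "k \<in> K" "min r (F k) < y - f k" "y - f k < max s (F k)"
  shows "\<exists>e>0. \<forall>c d. c < d \<longrightarrow> k - e \<le> c \<longrightarrow> d \<le> k + e \<longrightarrow> (\<exists>z. c < z \<and> z < d \<and> F z + f z = y)"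
proof -
  have Q: "QQ F r s k" using KQ assms(1) by blast
  define v1 where "v1 = (min r (F k) + (y - f k)) / 2"
  define v2 where "v2 = (max s (F k) + (y - f k)) / 2"
  have "DD F k v1" using Q assms(2,3) unfolding QQ_def v1_def by auto
  moreover have "DD F k v2" using Q assms(2,3) unfolding QQ_def v2_def by auto
  ultimately show ?thesis using hit[of k v1 v2 y] assms(2,3) unfolding v1_def v2_def by auto
qed

lemma core:
  assumes pq: "p \<le> q" and y: "min (F p + f p) (F q + f q) \<le> y" "y \<le> max (F p + f p) (F q + f q)"
  shows "\<exists>z. p \<le> z \<and> z \<le> q \<and> F z + f z = y"
proof (cases "K \<inter> {p..q} = {}")
  case True
  have fc: "f z = f p" if "p \<le> z" "z \<le> q" for z
  proof -
    have "{p<..<z} \<inter> K = {}" using True that by auto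
    then show ?thesis using Kconst that by auto
  qed
  have "min (F p + f p) (F q + f p) \<le> y" "y \<le> max (F p + f p) (F q + f p)"
    using y fc[of q] pq by simp_all
  note sh = shift_aux[OF this]
  have "\<exists>z. p \<le> z \<and> z \<le> q \<and> F z = y - f p" by (rule darbouxD[OF dF pq sh])
  then obtain z where z: "p \<le> z \<and> z \<le> q \<and> F z = y - f p" ..
  have "F z + f z = y" using z fc[of z] by simp
  then show ?thesis using z by blast
next
  case False
  define S where "S = K \<inter> {p..q}"
  have Sc: "closed S" unfolding S_def using Kc by (simp add: closed_Int)
  have Sne: "S \<noteq> {}" using False by (simp add: S_def)
  have bdd: "bdd_below S" "bdd_above S" unfolding S_def by (auto intro: bdd_belowI bdd_aboveI)
  define k1 where "k1 = Inf S"
  define k2 where "k2 = Sup S"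
  have k1S: "k1 \<in> S" unfolding k1_def using closed_contains_Inf[OF Sne bdd(1) Sc] .
  have k2S: "k2 \<in> S" unfolding k2_def using closed_contains_Sup[OF Sne bdd(2) Sc] .
  have k1le: "k1 \<le> x" if "x \<in> S" for x unfolding k1_def using bdd(1) that by (rule cInf_lower[rotated])
  have k2ge: "x \<le> k2" if "x \<in> S" for x unfolding k2_def using bdd(2) that by (rule cSup_upper[rotated])
  have k1K: "k1 \<in> K" "p \<le> k1" "k1 \<le> q" using k1S by (auto simp: S_def)
  have k2K: "k2 \<in> K" "p \<le> k2" "k2 \<le> q" using k2S by (auto simp: S_def)
  have k12: "k1 \<le> k2" using k1le k2S by blast
  have f1: "f z = f p" if "p \<le> z" "z \<le> k1" for z
  proof -
    have "{p<..<z} \<inter> K = {}"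
    proof (rule ccontr)
      assume "{p<..<z} \<inter> K \<noteq> {}"
      then obtain x where "x \<in> K" "p < x" "x < z" by auto
      then have "x \<in> S" using that k1K unfolding S_def by auto
      then show False using k1le \<open>x < z\<close> that by fastforce
    qed
    then show ?thesis using Kconst[rule_format, of p z] that by auto
  qed
  have f2: "f z = f q" if "k2 \<le> z" "z \<le> q" for z
  proof -
    have "{z<..<q} \<inter> K = {}"
    proof (rule ccontr)
      assume "{z<..<q} \<inter> K \<noteq> {}"
      then obtain x where "x \<in> K" "z < x" "x < q" by auto
      then have "x \<in> S" using that k2K unfolding S_def by auto
      then show False using k2ge \<open>z < x\<close> that by fastforce
    qed
    then have "f z = f q" using Kconst[rule_format, of z q] that by auto
    then show ?thesis .
  qed
  have fk1: "f k1 = f p" using f1[of k1] k1K by simp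
  have fk2: "f k2 = f q" using f2[of k2] k2K by simp
  let ?G = "\<lambda>x. F x + f x"
  show ?thesis
  proof (cases "min (?G p) (?G k1) \<le> y \<and> y \<le> max (?G p) (?G k1)")
    case True
    then have "min (F p + f p) (F k1 + f p) \<le> y" "y \<le> max (F p + f p) (F k1 + f p)"
      using fk1 by simp_all
    note sh = shift_aux[OF this]
    have "\<exists>z. p \<le> z \<and> z \<le> k1 \<and> F z = y - f p" by (rule darbouxD[OF dF k1K(2) sh])
    then obtain z where z: "p \<le> z \<and> z \<le> k1 \<and> F z = y - f p" ..
    have "F z + f z = y" using z f1[of z] by simp
    moreover have "z \<le> q" using z k1K(3) by linarith
    ultimately show ?thesis using z by blast
  next
    case nc1: False
    show ?thesis
    proof (cases "min (?G k2) (?G q) \<le> y \<and> y \<le> max (?G k2) (?G q)")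
      case True
      then have "min (F k2 + f q) (F q + f q) \<le> y" "y \<le> max (F k2 + f q) (F q + f q)"
        using fk2 by simp_all
      note sh = shift_aux[OF this]
      have "\<exists>z. k2 \<le> z \<and> z \<le> q \<and> F z = y - f q" by (rule darbouxD[OF dF k2K(3) sh])
      then obtain z where z: "k2 \<le> z \<and> z \<le> q \<and> F z = y - f q" ..
      have "F z + f z = y" using z f2[of z] by simp
      moreover have "p \<le> z" using z k2K(2) by linarith
      ultimately show ?thesis using z by blast
    next
      case nc2: False
      have strict: "(?G k1 < y \<and> y < ?G k2) \<or> (?G k2 < y \<and> y < ?G k1)"
        using between_aux[OF y nc1 nc2] .
      have k12s: "k1 < k2" using strict k12 by (cases "k1 = k2") auto
      have o: "\<bar>f k1 - f k2\<bar> < s - r" using osc by blast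
      have "(min r (F k1) < y - f k1 \<and> y - f k1 < max s (F k1)) \<or>
            (min r (F k2) < y - f k2 \<and> y - f k2 < max s (F k2))"
        using T_aux[OF o strict] .
      then show ?thesis
      proof
        assume T: "min r (F k1) < y - f k1 \<and> y - f k1 < max s (F k1)"
        from hitT[OF k1K(1) T[THEN conjunct1] T[THEN conjunct2]]
        obtain e where e: "e > 0" "\<forall>c d. c < d \<longrightarrow> k1 - e \<le> c \<longrightarrow> d \<le> k1 + e \<longrightarrow> (\<exists>z. c < z \<and> z < d \<and> F z + f z = y)"
          by (elim exE conjE)
        have "k1 < min (k1 + e) k2" "k1 - e \<le> k1" "min (k1 + e) k2 \<le> k1 + e" using e(1) k12s by auto
        then have "\<exists>z. k1 < z \<and> z < min (k1 + e) k2 \<and> F z + f z = y"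
          using e(2) by blast
        then obtain z where z: "k1 < z \<and> z < min (k1 + e) k2 \<and> F z + f z = y" ..
        then have "p \<le> z \<and> z \<le> q \<and> F z + f z = y" using k1K k2K by auto
        then show ?thesis by blast
      next
        assume T: "min r (F k2) < y - f k2 \<and> y - f k2 < max s (F k2)"
        from hitT[OF k2K(1) T[THEN conjunct1] T[THEN conjunct2]]
        obtain e where e: "e > 0" "\<forall>c d. c < d \<longrightarrow> k2 - e \<le> c \<longrightarrow> d \<le> k2 + e \<longrightarrow> (\<exists>z. c < z \<and> z < d \<and> F z + f z = y)"
          by (elim exE conjE)
        have "max (k2 - e) k1 < k2" "k2 - e \<le> max (k2 - e) k1" "k2 \<le> k2 + e" using e(1) k12s by auto
        then have "\<exists>z. max (k2 - e) k1 < z \<and> z < k2 \<and> F z + f z = y"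
          using e(2) by blast
        then obtain z where z: "max (k2 - e) k1 < z \<and> z < k2 \<and> F z + f z = y" ..
        then have "p \<le> z \<and> z \<le> q \<and> F z + f z = y" using k1K k2K by auto
        then show ?thesis by blast
      qed
    qed
  qed
qed

lemma sum_darboux: "darboux (\<lambda>x. F x + f x)"
  unfolding darboux_def
proof (intro allI impI)
  fix I :: "real set" assume I: "is_interval I"
  show "is_interval ((\<lambda>x. F x + f x) ` I)"
    unfolding is_interval_1
  proof (intro ballI allI impI)
    fix a b x assume a: "a \<in> (\<lambda>x. F x + f x) ` I" and b: "b \<in> (\<lambda>x. F x + f x) ` I" and x: "a \<le> x \<and> x \<le> b"
    obtain p where p: "p \<in> I" "a = F p + f p" using a by blast
    obtain q where q: "q \<in> I" "b = F q + f q" using b by blast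
    have m1: "min (F p + f p) (F q + f q) \<le> x" "x \<le> max (F p + f p) (F q + f q)"
      using x p(2) q(2) by (simp_all add: min_le_iff_disj le_max_iff_disj)
    have m2: "min (F q + f q) (F p + f p) \<le> x" "x \<le> max (F q + f q) (F p + f p)"
      using m1 by (simp_all add: min.commute max.commute)
    have "\<exists>z. min p q \<le> z \<and> z \<le> max p q \<and> F z + f z = x"
    proof (cases "p \<le> q")
      case True
      then show ?thesis using core[OF True m1] by (simp add: min_def max_def)
    next
      case False
      then have qp: "q \<le> p" by simp
      show ?thesis using core[OF qp m2] False by (simp add: min_def max_def)
    qed
    then obtain z where z: "min p q \<le> z \<and> z \<le> max p q \<and> F z + f z = x" ..
    have iv: "\<And>a b x. a \<in> I \<Longrightarrow> b \<in> I \<Longrightarrow> a \<le> x \<Longrightarrow> x \<le> b \<Longrightarrow> x \<in> I"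
      using I unfolding is_interval_1 by blast
    have "min p q \<in> I" "max p q \<in> I" using p(1) q(1) by (simp_all add: min_def max_def)
    then have "z \<in> I" using iv z by blast
    then show "x \<in> (\<lambda>x. F x + f x) ` I" using z by (metis (no_types, lifting) image_eqI)
  qed
qed

end

context
  fixes U :: "nat \<Rightarrow> real set" and G0 :: "real set" and a0 b0 :: real
  assumes Uopen: "\<forall>n. open (U n)"
    and G0U: "\<forall>x\<in>G0. \<forall>n. x \<in> U n"
    and G0dense: "\<forall>x y. a0 \<le> x \<longrightarrow> x < y \<longrightarrow> y \<le> b0 \<longrightarrow> (\<exists>z\<in>G0. x < z \<and> z < y)"
    and a0b0: "a0 < b0" "a0 \<in> G0" "b0 \<in> G0"
begin

definition spP :: "nat \<Rightarrow> real \<Rightarrow> real \<Rightarrow> real \<times> real \<Rightarrow> bool" where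
  "spP n a b cd \<longleftrightarrow> a < fst cd \<and> fst cd < snd cd \<and> snd cd < b \<and> fst cd \<in> G0 \<and> snd cd \<in> G0
     \<and> {a..fst cd} \<subseteq> U n \<and> {snd cd..b} \<subseteq> U n"

definition sp :: "nat \<Rightarrow> real \<Rightarrow> real \<Rightarrow> real \<times> real" where
  "sp n a b = (SOME cd. spP n a b cd)"

lemma sp_ex:
  assumes "a < b" "a \<in> G0" "b \<in> G0" "a0 \<le> a" "b \<le> b0"
  shows "\<exists>cd. spP n a b cd"
proof -
  have "a \<in> U n" "b \<in> U n" using G0U assms by auto
  then obtain e1 e2 where e1: "e1 > 0" "ball a e1 \<subseteq> U n" and e2: "e2 > 0" "ball b e2 \<subseteq> U n"
    using Uopen open_contains_ball_eq by metis
  define m where "m = (a + b) / 2"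
  have "a < min (a + e1/2) m" using e1 assms(1) by (simp add: m_def)
  moreover have "min (a + e1/2) m \<le> b0" using assms(1,5) unfolding m_def by (simp add: field_simps min.coboundedI2)
  ultimately have "\<exists>z\<in>G0. a < z \<and> z < min (a + e1/2) m" using G0dense assms(4) by blast
  then obtain c where c: "c \<in> G0" "a < c" "c < min (a + e1/2) m" by blast
  have "max (b - e2/2) m < b" using e2 assms(1) by (simp add: m_def)
  moreover have "a0 \<le> max (b - e2/2) m" using assms(1,4) unfolding m_def by (simp add: field_simps max.coboundedI2)
  ultimately have "\<exists>z\<in>G0. max (b - e2/2) m < z \<and> z < b" using G0dense assms(5) by blast
  then obtain d where d: "d \<in> G0" "max (b - e2/2) m < d" "d < b" by blast
  have "{a..c} \<subseteq> ball a e1" using c e1 by (auto simp: dist_real_def)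
  moreover have "{d..b} \<subseteq> ball b e2" using d e2 by (auto simp: dist_real_def)
  ultimately have "spP n a b (c, d)" using c d e1 e2 unfolding spP_def by auto
  then show ?thesis ..
qed

lemma sp_spec:
  assumes "a < b" "a \<in> G0" "b \<in> G0" "a0 \<le> a" "b \<le> b0"
  shows "spP n a b (sp n a b)"
  unfolding sp_def using sp_ex[OF assms] by (rule someI_ex)

fun AB :: "nat \<Rightarrow> nat \<Rightarrow> real \<times> real" where
  "AB 0 k = (a0, b0)"
| "AB (Suc n) k = (let p = AB n (k div 2); cd = sp n (fst p) (snd p) in
     if even k then (fst p, fst cd) else (snd cd, snd p))"

definition A where "A n k = fst (AB n k)"
definition B where "B n k = snd (AB n k)"

lemma A0: "A 0 k = a0" and B0: "B 0 k = b0" by (simp_all add: A_def B_def)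

lemma A_Suc: "A (Suc n) k = (if even k then A n (k div 2) else snd (sp n (A n (k div 2)) (B n (k div 2))))"
  by (simp add: A_def B_def Let_def)
lemma B_Suc: "B (Suc n) k = (if even k then fst (sp n (A n (k div 2)) (B n (k div 2))) else B n (k div 2))"
  by (simp add: A_def B_def Let_def)

definition Inv :: "nat \<Rightarrow> bool" where
  "Inv n \<longleftrightarrow> (\<forall>k<2^n. A n k < B n k \<and> A n k \<in> G0 \<and> B n k \<in> G0 \<and> a0 \<le> A n k \<and> B n k \<le> b0)
     \<and> (\<forall>j k. j < k \<longrightarrow> k < 2^n \<longrightarrow> B n j < A n k)"

lemma step_facts:
  assumes I: "Inv n" and k: "k < 2^Suc n"
  shows "A n (k div 2) \<le> A (Suc n) k" "B (Suc n) k \<le> B n (k div 2)" "A (Suc n) k < B (Suc n) k"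
    "A (Suc n) k \<in> G0" "B (Suc n) k \<in> G0" "{A (Suc n) k..B (Suc n) k} \<subseteq> U n"
proof -
  let ?p = "k div 2"
  have p: "?p < 2^n" using k by simp
  have h: "A n ?p < B n ?p" "A n ?p \<in> G0" "B n ?p \<in> G0" "a0 \<le> A n ?p" "B n ?p \<le> b0"
    using I p unfolding Inv_def by blast+
  have S: "spP n (A n ?p) (B n ?p) (sp n (A n ?p) (B n ?p))" using sp_spec[OF h] .
  show "A n (k div 2) \<le> A (Suc n) k" "B (Suc n) k \<le> B n (k div 2)" "A (Suc n) k < B (Suc n) k"
    "A (Suc n) k \<in> G0" "B (Suc n) k \<in> G0" "{A (Suc n) k..B (Suc n) k} \<subseteq> U n"
    using S h unfolding spP_def A_Suc B_Suc by (auto simp del: atLeastAtMost_iff)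
qed

lemma Inv_all: "Inv n"
proof (induction n)
  case 0
  show ?case using a0b0 unfolding Inv_def by (simp add: A0 B0)
next
  case (Suc n)
  have part1: "\<forall>k<2^Suc n. A (Suc n) k < B (Suc n) k \<and> A (Suc n) k \<in> G0 \<and> B (Suc n) k \<in> G0
      \<and> a0 \<le> A (Suc n) k \<and> B (Suc n) k \<le> b0"
  proof (intro allI impI)
    fix k :: nat assume k: "k < 2^Suc n"
    have p: "k div 2 < 2^n" using k by simp
    have "a0 \<le> A n (k div 2)" "B n (k div 2) \<le> b0" using Suc.IH p unfolding Inv_def by blast+
    then show "A (Suc n) k < B (Suc n) k \<and> A (Suc n) k \<in> G0 \<and> B (Suc n) k \<in> G0
      \<and> a0 \<le> A (Suc n) k \<and> B (Suc n) k \<le> b0"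
      using step_facts[OF Suc.IH k] by linarith
  qed
  have part2: "\<forall>j k. j < k \<longrightarrow> k < 2^Suc n \<longrightarrow> B (Suc n) j < A (Suc n) k"
  proof (intro allI impI)
    fix j k :: nat assume jk: "j < k" "k < 2^Suc n"
    have j: "j < 2^Suc n" using jk by simp
    show "B (Suc n) j < A (Suc n) k"
    proof (cases "j div 2 = k div 2")
      case True
      then have ev: "even j" "odd k" using jk(1) by presburger+
      let ?p = "k div 2"
      have p: "?p < 2^n" using jk by simp
      have h: "A n ?p < B n ?p" "A n ?p \<in> G0" "B n ?p \<in> G0" "a0 \<le> A n ?p" "B n ?p \<le> b0"
        using Suc.IH p unfolding Inv_def by blast+
      have S: "spP n (A n ?p) (B n ?p) (sp n (A n ?p) (B n ?p))" using sp_spec[OF h] .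
      then show ?thesis using ev True unfolding spP_def A_Suc B_Suc by simp
    next
      case False
      then have "j div 2 < k div 2" using jk(1) by (simp add: div_le_mono le_neq_implies_less)
      moreover have "k div 2 < 2^n" using jk by simp
      ultimately have "B n (j div 2) < A n (k div 2)" using Suc.IH unfolding Inv_def by blast
      then show ?thesis using step_facts[OF Suc.IH j] step_facts[OF Suc.IH jk(2)] by linarith
    qed
  qed
  show ?case unfolding Inv_def using part1 part2 by blast
qed

lemma AB_lt: "k < 2^n \<Longrightarrow> A n k < B n k"
  using Inv_all[of n] unfolding Inv_def by blast

lemma AB_range: "k < 2^n \<Longrightarrow> a0 \<le> A n k \<and> B n k \<le> b0"
  using Inv_all[of n] unfolding Inv_def by blast

lemma BA_lt: "j < k \<Longrightarrow> k < 2^n \<Longrightarrow> B n j < A n k"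
  using Inv_all[of n] unfolding Inv_def by blast

lemma A_mono_strict: "j < k \<Longrightarrow> k < 2^n \<Longrightarrow> A n j < A n k"
  using AB_lt[of j n] BA_lt[of j k n] by simp

lemma A_lift: "A (m + d) (j * 2^d) = A m j"
proof (induction d)
  case 0 then show ?case by simp
next
  case (Suc d)
  have "j * 2 ^ Suc d = 2 * (j * 2^d)" by simp
  then show ?case using Suc by (simp add: A_Suc)
qed

lemma nest:
  assumes "j < 2^(m + d)"
  shows "A m (j div 2^d) \<le> A (m + d) j \<and> B (m + d) j \<le> B m (j div 2^d)"
  using assms
proof (induction d arbitrary: j)
  case 0 then show ?case by simp
next
  case (Suc d)
  have j: "j < 2^Suc (m + d)" using Suc.prems by simp
  have jd: "j div 2 < 2^(m+d)" using j by simp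
  have IH: "A m (j div 2 div 2^d) \<le> A (m + d) (j div 2) \<and> B (m + d) (j div 2) \<le> B m (j div 2 div 2^d)"
    using Suc.IH[OF jd] .
  have eq: "j div 2 div 2^d = j div 2^Suc d" by (simp add: div_mult2_eq)
  have "A (m + d) (j div 2) \<le> A (Suc (m + d)) j" "B (Suc (m + d)) j \<le> B (m + d) (j div 2)"
    using step_facts[OF Inv_all j] by simp_all
  then show ?case using IH eq by simp
qed

definition KK :: "real set" where
  "KK = {x. \<forall>m. \<exists>j<2^m. A m j \<le> x \<and> x \<le> B m j}"

lemma KK_closed: "closed KK"
proof -
  have "KK = (\<Inter>m. \<Union>j\<in>{..<(2::nat)^m}. {A m j..B m j})"
  proof (rule set_eqI)
    fix x show "x \<in> KK \<longleftrightarrow> x \<in> (\<Inter>m. \<Union>j\<in>{..<(2::nat)^m}. {A m j..B m j})"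
      unfolding KK_def by (simp add: Bex_def)
  qed
  moreover have "closed (\<Union>j\<in>{..<(2::nat)^m}. {A m j..B m j})" for m
    by (intro closed_UN) auto
  ultimately show ?thesis by (simp add: closed_INT)
qed

lemma KK_U: "x \<in> KK \<Longrightarrow> x \<in> U n"
proof -
  assume "x \<in> KK"
  then obtain j where j: "j < 2^Suc n" "A (Suc n) j \<le> x" "x \<le> B (Suc n) j" unfolding KK_def by blast
  then show "x \<in> U n" using step_facts(6)[OF Inv_all j(1)] by auto
qed

lemma KK_range: "x \<in> KK \<Longrightarrow> a0 \<le> x \<and> x \<le> b0"
proof -
  assume "x \<in> KK"
  then obtain j where "A 0 j \<le> x" "x \<le> B 0 j" unfolding KK_def by blast
  then show ?thesis by (simp add: A0 B0)
qed

lemma A_in_KK: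
  assumes k: "k < 2^n"
  shows "A n k \<in> KK"
  unfolding KK_def
proof (intro CollectI allI)
  fix m
  show "\<exists>j<2^m. A m j \<le> A n k \<and> A n k \<le> B m j"
  proof (cases "m \<le> n")
    case True
    then obtain d where d: "n = m + d" using le_Suc_ex by blast
    have k': "k < 2^(m+d)" using k d by simp
    have "k div 2^d < 2^m" using k' by (simp add: div_less_iff_less_mult power_add)
    moreover have "A m (k div 2^d) \<le> A n k" "B n k \<le> B m (k div 2^d)" using nest[OF k'] d by simp_all
    moreover have "A n k < B n k" using AB_lt[OF k] .
    ultimately show ?thesis by force
  next
    case False
    then obtain d where d: "m = n + d" by (metis le_Suc_ex nat_le_linear)
    have "k * 2^d < 2^m" using k d by (simp add: power_add)
    moreover have "A m (k * 2^d) = A n k" using A_lift d by simp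
    moreover have "A m (k * 2^d) < B m (k * 2^d)" using AB_lt calculation(1) by blast
    ultimately show ?thesis by force
  qed
qed

definition fv :: "real \<Rightarrow> real" where
  "fv x = Sup ({0} \<union> {real k / 2^n | n k. k < 2^n \<and> A n k \<le> x})"

lemma fv_set_bounds:
  shows "\<forall>w\<in>({0} \<union> {real k / 2^n | n k. k < 2^n \<and> A n k \<le> x}). 0 \<le> w \<and> w < 1"
proof
  fix w assume "w \<in> {0} \<union> {real k / 2^n | n k. k < 2^n \<and> A n k \<le> x}"
  then show "0 \<le> w \<and> w < 1"
  proof
    assume "w \<in> {0}" then show ?thesis by simp
  next
    assume "w \<in> {real k / 2^n | n k. k < 2^n \<and> A n k \<le> x}"
    then obtain n k where "k < (2::nat)^n" "w = real k / 2^n" by blast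
    moreover then have "real k < 2^n" by (metis of_nat_less_iff of_nat_numeral of_nat_power)
    ultimately show ?thesis by (simp add: divide_less_eq)
  qed
qed

lemma fv_bdd: "bdd_above ({0} \<union> {real k / 2^n | n k. k < 2^n \<and> A n k \<le> x})"
  using fv_set_bounds[of x] by (meson bdd_above.I less_imp_le)

lemma fv_ge0: "0 \<le> fv x"
  unfolding fv_def using fv_bdd by (intro cSup_upper) auto

lemma fv_le1: "fv x \<le> 1"
  unfolding fv_def using fv_set_bounds[of x] by (intro cSup_least) auto

lemma fv_mono: "x \<le> y \<Longrightarrow> fv x \<le> fv y"
proof -
  assume xy: "x \<le> y"
  have "{real k / 2^n | n k. k < 2^n \<and> A n k \<le> x} \<subseteq> {real k / 2^n | n k. k < 2^n \<and> A n k \<le> y}"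
  proof
    fix w assume "w \<in> {real k / 2^n | n k. k < 2^n \<and> A n k \<le> x}"
    then obtain n k where "w = real k / 2^n" "k < 2^n" "A n k \<le> x" by blast
    moreover then have "A n k \<le> y" using xy by linarith
    ultimately show "w \<in> {real k / 2^n | n k. k < 2^n \<and> A n k \<le> y}" by blast
  qed
  then have "{0} \<union> {real k / 2^n | n k. k < 2^n \<and> A n k \<le> x} \<subseteq> {0} \<union> {real k / 2^n | n k. k < 2^n \<and> A n k \<le> y}"
    by blast
  then show ?thesis unfolding fv_def using cSup_subset_mono[OF _ fv_bdd[of y]] by blast
qed

lemma fv_A:
  assumes k: "k < 2^n"
  shows "fv (A n k) = real k / 2^n"
  unfolding fv_def
proof (rule cSup_eq_maximum)
  show "real k / 2^n \<in> {0} \<union> {real k' / 2^n' | n' k'. k' < 2^n' \<and> A n' k' \<le> A n k}"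
    using k by blast
next
  fix w assume "w \<in> {0} \<union> {real k' / 2^n' | n' k'. k' < 2^n' \<and> A n' k' \<le> A n k}"
  then show "w \<le> real k / 2^n"
  proof
    assume "w \<in> {0}" then show ?thesis by simp
  next
    assume "w \<in> {real k' / 2^n' | n' k'. k' < 2^n' \<and> A n' k' \<le> A n k}"
    then obtain m j where mj: "j < 2^m" "A m j \<le> A n k" "w = real j / 2^m" by blast
    have e1: "A (m + n) (j * 2^n) = A m j" by (rule A_lift)
    have e2': "A (n + m) (k * 2^m) = A n k" by (rule A_lift)
    have mn: "n + m = m + n" by (rule add.commute)
    have e2: "A (m + n) (k * 2^m) = A n k" using e2' unfolding mn .
    have i1: "j * 2^n < 2^(m+n)" using mj(1) by (simp add: power_add)
    have i2: "k * 2^m < 2^(m+n)" using k by (simp add: power_add mult.commute)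
    have "j * 2^n \<le> k * 2^m"
    proof (rule ccontr)
      assume "\<not> j * 2^n \<le> k * 2^m"
      then have "k * 2^m < j * 2^n" by (simp only: not_le)
      from A_mono_strict[OF this i1] have "A (m+n) (k * 2^m) < A (m+n) (j * 2^n)" .
      then have "A n k < A m j" unfolding e1 e2 .
      then show False using mj(2) by linarith
    qed
    then have "real (j * 2^n) \<le> real (k * 2^m)" by (rule of_nat_mono)
    then have le: "real j * 2^n \<le> real k * 2^m" by simp
    have "real j / 2^m \<le> real k / 2^n" using le by (simp add: field_simps)
    then show ?thesis using mj(3) by simp
  qed
qed

lemma dyadic_dense:
  fixes lo hi :: real
  assumes "0 \<le> lo" "lo < hi" "hi \<le> 1"
  shows "\<exists>n k. k < (2::nat)^n \<and> lo < real k / 2^n \<and> real k / 2^n < hi"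
proof -
  obtain n where n: "1 / (hi - lo) < 2^n" using real_arch_pow[of 2 "1 / (hi - lo)"] by auto
  have pos: "(0::real) < 2^n" by simp
  have "1 < (hi - lo) * 2^n" using n assms(2) by (simp add: field_simps)
  define k where "k = nat (\<lfloor>lo * 2^n\<rfloor> + 1)"
  have fl: "real_of_int \<lfloor>lo * 2^n\<rfloor> \<le> lo * 2^n" "lo * 2^n < real_of_int \<lfloor>lo * 2^n\<rfloor> + 1"
    by linarith+
  have nn: "0 \<le> \<lfloor>lo * 2^n\<rfloor> + 1" using assms(1) by simp
  have kr: "real k = real_of_int \<lfloor>lo * 2^n\<rfloor> + 1" unfolding k_def using nn by simp
  have "lo * 2^n < real k" using fl kr by linarith
  then have l: "lo < real k / 2^n" using pos by (simp add: field_simps)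
  have "real k \<le> lo * 2^n + 1" using fl kr by linarith
  also have "... < hi * 2^n" using \<open>1 < (hi - lo) * 2^n\<close> by (simp add: algebra_simps)
  finally have h: "real k / 2^n < hi" using pos by (simp add: field_simps)
  have hk: "real k < hi * 2^n" using h pos by (simp add: field_simps)
  have "hi * 2^n \<le> 1 * (2::real)^n" using assms(3) pos by (intro mult_right_mono) auto
  then have "real k < (2::real)^n" using hk by linarith
  then have "k < 2^n" by simp
  then show ?thesis using l h by blast
qed

lemma fv_cont: "continuous_on UNIV fv"
proof -
  have "continuous (at x) fv" for x
    unfolding continuous_at_eps_delta
  proof (intro allI impI)
    fix e :: real assume e: "e > 0"
    obtain L where L: "L < x" "\<forall>y. L < y \<longrightarrow> fv x - e < fv y"
    proof (cases "fv x - e < 0")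
      case True
      have "\<forall>y. x - 1 < y \<longrightarrow> fv x - e < fv y" using True fv_ge0 by (metis less_le_trans)
      then show ?thesis using that[of "x - 1"] by simp
    next
      case False
      then have "0 \<le> fv x - e" "fv x - e < fv x" "fv x \<le> 1" using e fv_le1 by auto
      then obtain n k where nk: "k < (2::nat)^n" "fv x - e < real k / 2^n" "real k / 2^n < fv x"
        using dyadic_dense by blast
      have "A n k < x"
      proof (rule ccontr)
        assume "\<not> A n k < x"
        then have "fv x \<le> fv (A n k)" using fv_mono by simp
        then show False using nk fv_A by simp
      qed
      moreover have "\<forall>y. A n k < y \<longrightarrow> fv x - e < fv y"
      proof (intro allI impI)
        fix y assume "A n k < y"
        then have "fv (A n k) \<le> fv y" using fv_mono by simp
        then show "fv x - e < fv y" using fv_A[OF nk(1)] nk(2) by linarith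
      qed
      ultimately show ?thesis using that by blast
    qed
    obtain R where R: "x < R" "\<forall>y. y < R \<longrightarrow> fv y < fv x + e"
    proof (cases "1 < fv x + e")
      case True
      have "\<forall>y. y < x + 1 \<longrightarrow> fv y < fv x + e" using True fv_le1 by (metis le_less_trans)
      then show ?thesis using that[of "x + 1"] by simp
    next
      case False
      then have "0 \<le> fv x" "fv x < fv x + e" "fv x + e \<le> 1" using e fv_ge0 by auto
      then obtain n k where nk: "k < (2::nat)^n" "fv x < real k / 2^n" "real k / 2^n < fv x + e"
        using dyadic_dense by blast
      have "x < A n k"
      proof (rule ccontr)
        assume "\<not> x < A n k"
        then have "fv (A n k) \<le> fv x" using fv_mono by simp
        then show False using nk fv_A by simp
      qed
      moreover have "\<forall>y. y < A n k \<longrightarrow> fv y < fv x + e"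
      proof (intro allI impI)
        fix y assume "y < A n k"
        then have "fv y \<le> fv (A n k)" using fv_mono by simp
        then show "fv y < fv x + e" using fv_A[OF nk(1)] nk(3) by linarith
      qed
      ultimately show ?thesis using that by blast
    qed
    show "\<exists>d>0. \<forall>y. dist y x < d \<longrightarrow> dist (fv y) (fv x) < e"
    proof (intro exI conjI allI impI)
      show "0 < min (x - L) (R - x)" using L R by simp
      fix y assume "dist y x < min (x - L) (R - x)"
      then have "L < y" "y < R" unfolding dist_real_def by auto
      then have "fv x - e < fv y" "fv y < fv x + e" using L R by auto
      then show "dist (fv y) (fv x) < e" unfolding dist_real_def by auto
    qed
  qed
  then show ?thesis by (simp add: continuous_on_eq_continuous_at)
qed

lemma fv_const:
  assumes "a \<le> b" "{a<..<b} \<inter> KK = {}"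
  shows "fv a = fv b"
proof (rule ccontr)
  assume "fv a \<noteq> fv b"
  then have lt: "fv a < fv b" using fv_mono[OF assms(1)] by simp
  then obtain n k where nk: "k < (2::nat)^n" "fv a < real k / 2^n" "real k / 2^n < fv b"
    using dyadic_dense[of "fv a" "fv b"] fv_ge0 fv_le1 by blast
  have "a < A n k"
  proof (rule ccontr)
    assume "\<not> a < A n k"
    then have "fv (A n k) \<le> fv a" using fv_mono by simp
    then show False using nk fv_A by simp
  qed
  moreover have "A n k < b"
  proof (rule ccontr)
    assume "\<not> A n k < b"
    then have "fv b \<le> fv (A n k)" using fv_mono by simp
    then show False using nk fv_A by simp
  qed
  ultimately show False using A_in_KK[OF nk(1)] assms(2) by auto
qed

lemma fv_nonconst: "fv (A 0 0) = 0" "fv (A 1 1) = 1/2"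
  using fv_A[of 0 0] fv_A[of 1 1] by simp_all

lemma tree_result:
  "\<exists>(f::real\<Rightarrow>real) K. continuous_on UNIV f \<and> (\<forall>x. 0 \<le> f x \<and> f x \<le> 1) \<and> (\<exists>a b. f a \<noteq> f b) \<and> closed K
     \<and> (\<forall>x\<in>K. (\<forall>n. x \<in> U n) \<and> a0 \<le> x \<and> x \<le> b0)
     \<and> (\<forall>a b. a \<le> b \<longrightarrow> {a<..<b} \<inter> K = {} \<longrightarrow> f a = f b)"
proof -
  have c1: "continuous_on UNIV fv" by (rule fv_cont)
  have c2: "\<forall>x. 0 \<le> fv x \<and> fv x \<le> 1" using fv_ge0 fv_le1 by blast
  have "fv (A 0 0) \<noteq> fv (A 1 1)" using fv_nonconst by simp
  then have c3: "\<exists>a b. fv a \<noteq> fv b" by blast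
  have c4: "closed KK" by (rule KK_closed)
  have c5: "\<forall>x\<in>KK. (\<forall>n. x \<in> U n) \<and> a0 \<le> x \<and> x \<le> b0" using KK_U KK_range by blast
  have c6: "\<forall>a b. a \<le> b \<longrightarrow> {a<..<b} \<inter> KK = {} \<longrightarrow> fv a = fv b" using fv_const by blast
  have H: "continuous_on UNIV fv \<and> (\<forall>x. 0 \<le> fv x \<and> fv x \<le> 1) \<and> (\<exists>a b. fv a \<noteq> fv b) \<and> closed KK
     \<and> (\<forall>x\<in>KK. (\<forall>n. x \<in> U n) \<and> a0 \<le> x \<and> x \<le> b0)
     \<and> (\<forall>a b. a \<le> b \<longrightarrow> {a<..<b} \<inter> KK = {} \<longrightarrow> fv a = fv b)"
    using c1 c2 c3 c4 c5 c6 by (intro conjI)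
  show ?thesis by (rule exI[where x=fv], rule exI[where x=KK], rule H)
qed

end

definition EE :: "(real \<Rightarrow> real) \<Rightarrow> real \<Rightarrow> real \<Rightarrow> real set" where
  "EE F r s = {x. \<forall>h>0. {r<..<s} \<subseteq> F ` ball x h}"

lemma darboux_ball:
  assumes "darboux F" shows "is_interval (F ` ball x h)"
proof -
  have "\<forall>I::real set. is_interval I \<longrightarrow> is_interval (F ` I)" using assms unfolding darboux_def .
  from this[rule_format, OF is_interval_ball_real[of x h]] show ?thesis .
qed

lemma interval_between:
  fixes S :: "real set"
  assumes "is_interval S" "a \<in> S" "b \<in> S"
  shows "{a..b} \<subseteq> S"
proof
  fix x assume x: "x \<in> {a..b}"
  have iv: "\<And>a b x. a \<in> S \<Longrightarrow> b \<in> S \<Longrightarrow> a \<le> x \<Longrightarrow> x \<le> b \<Longrightarrow> x \<in> S"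
    using assms(1) unfolding is_interval_1 by blast
  show "x \<in> S" using iv[OF assms(2,3)] x by simp
qed

lemma rat_between:
  fixes a b :: real assumes "a < b"
  shows "\<exists>r\<in>\<rat>. \<exists>s\<in>\<rat>. a < r \<and> r < s \<and> s < b"
proof -
  obtain r where r: "r \<in> \<rat>" "a < r" "r < b" using Rats_dense_in_real[OF assms] by blast
  obtain s where s: "s \<in> \<rat>" "r < s" "s < b" using Rats_dense_in_real[OF r(3)] by blast
  show ?thesis using r s by blast
qed

lemma cover:
  assumes dF: "darboux F" and nc: "\<not> isCont F x"
  shows "\<exists>r s. r \<in> \<rat> \<and> s \<in> \<rat> \<and> r < s \<and> x \<in> EE F r s"
proof -
  have "\<not> (\<forall>e>0. \<exists>d>0. \<forall>y. dist y x < d \<longrightarrow> dist (F y) (F x) < e)"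
    using nc continuous_at_eps_delta[of x F] by simp
  then obtain e where e: "e > 0" "\<forall>d>0. \<exists>y. dist y x < d \<and> \<not> dist (F y) (F x) < e"
    by blast
  have far: "\<exists>y. dist y x < d \<and> e \<le> \<bar>F y - F x\<bar>" if "d > 0" for d
    using e(2) that by (auto simp: dist_real_def not_less)
  show ?thesis
  proof (cases "\<forall>h>0. {F x..F x + e} \<subseteq> F ` ball x h")
    case True
    obtain r s where rs: "r \<in> \<rat>" "s \<in> \<rat>" "F x < r" "r < s" "s < F x + e"
      using rat_between[of "F x" "F x + e"] e(1) by auto
    have "x \<in> EE F r s" unfolding EE_def
    proof (intro CollectI allI impI)
      fix h :: real assume "h > 0"
      then have "{F x..F x + e} \<subseteq> F ` ball x h" using True by blast
      moreover have "{r<..<s} \<subseteq> {F x..F x + e}" using rs by auto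
      ultimately show "{r<..<s} \<subseteq> F ` ball x h" by blast
    qed
    then show ?thesis using rs by blast
  next
    case False
    then obtain h0 where h0: "h0 > 0" "\<not> {F x..F x + e} \<subseteq> F ` ball x h0" by blast
    have down: "{F x - e..F x} \<subseteq> F ` ball x h" if h: "h > 0" for h
    proof -
      define h' where "h' = min h h0"
      have h': "h' > 0" using h h0 by (simp add: h'_def)
      obtain y where y: "dist y x < h'" "e \<le> \<bar>F y - F x\<bar>" using far[OF h'] by blast
      have sub1: "ball x h' \<subseteq> ball x h" "ball x h' \<subseteq> ball x h0" by (auto simp: h'_def)
      have I: "is_interval (F ` ball x h')" using darboux_ball[OF dF] .
      have xin: "F x \<in> F ` ball x h'" using h' by simp
      have yin: "F y \<in> F ` ball x h'" using y(1) by (simp add: dist_commute)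
      show ?thesis
      proof (cases "F x + e \<le> F y")
        case True
        have "{F x..F y} \<subseteq> F ` ball x h'" using interval_between[OF I xin yin] .
        moreover have "{F x..F x + e} \<subseteq> {F x..F y}" using True by auto
        moreover have "F ` ball x h' \<subseteq> F ` ball x h0" using sub1(2) by (rule image_mono)
        ultimately have "{F x..F x + e} \<subseteq> F ` ball x h0" by (meson order_trans)
        then show ?thesis using h0(2) by blast
      next
        case False
        then have "F y \<le> F x - e" using y(2) by (simp add: abs_if split: if_splits)
        have "{F y..F x} \<subseteq> F ` ball x h'" using interval_between[OF I yin xin] .
        moreover have "{F x - e..F x} \<subseteq> {F y..F x}" using \<open>F y \<le> F x - e\<close> by auto
        moreover have "F ` ball x h' \<subseteq> F ` ball x h" using sub1(1) by (rule image_mono)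
        ultimately show ?thesis by (meson order_trans)
      qed
    qed
    obtain r s where rs: "r \<in> \<rat>" "s \<in> \<rat>" "F x - e < r" "r < s" "s < F x"
      using rat_between[of "F x - e" "F x"] e(1) by auto
    have "x \<in> EE F r s" unfolding EE_def
    proof (intro CollectI allI impI)
      fix h :: real assume "h > 0"
      then have "{F x - e..F x} \<subseteq> F ` ball x h" using down by blast
      moreover have "{r<..<s} \<subseteq> {F x - e..F x}" using rs by auto
      ultimately show "{r<..<s} \<subseteq> F ` ball x h" by blast
    qed
    then show ?thesis using rs by blast
  qed
qed

lemma dense_of_empty_interior:
  fixes S :: "real set"
  assumes "interior S = {}"
  shows "closure (- S) = UNIV"
  using assms by (simp add: closure_complement)

lemma window:
  assumes dF: "darboux F" and cC: "countable {x. isCont F x}"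
  shows "\<exists>r s z \<rho>. r < s \<and> \<rho> > 0 \<and>
     (\<forall>a b. a < b \<longrightarrow> {a<..<b} \<subseteq> ball z \<rho> \<longrightarrow> {r<..<s} \<subseteq> F ` {a<..<b})"
proof -
  define C where "C = {x. isCont F x}"
  define RR where "RR = {(r, s). r \<in> (\<rat>::real set) \<and> s \<in> (\<rat>::real set) \<and> r < s}"
  have RRc: "countable RR"
  proof -
    have "RR \<subseteq> \<rat> \<times> \<rat>" unfolding RR_def by auto
    moreover have "countable ((\<rat>::real set) \<times> (\<rat>::real set))" using countable_rat by (intro countable_SIGMA)
    ultimately show ?thesis using countable_subset by blast
  qed
  have "\<exists>r s. r \<in> \<rat> \<and> s \<in> \<rat> \<and> r < s \<and> interior (closure (EE F r s)) \<noteq> {}"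
  proof (rule ccontr)
    assume H: "\<not> ?thesis"
    define \<G> where "\<G> = (\<lambda>(r, s). - closure (EE F r s)) ` RR \<union> (\<lambda>c. - {c}) ` C"
    have Gc: "countable \<G>" unfolding \<G>_def using RRc cC C_def by simp
    have Gp: "openin (top_of_set UNIV) T \<and> UNIV \<subseteq> closure T" if TG: "T \<in> \<G>" for T
    proof -
      have "open T \<and> closure T = UNIV"
      proof (cases "T \<in> (\<lambda>(r, s). - closure (EE F r s)) ` RR")
        case True
        then obtain r s where rs: "(r, s) \<in> RR" "T = - closure (EE F r s)" by auto
        have "interior (closure (EE F r s)) = {}" using H rs(1) unfolding RR_def by auto
        then show ?thesis using rs(2) by (simp add: closure_complement open_Compl)
      next
        case False
        then obtain c where "T = - {c}" using TG unfolding \<G>_def by blast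
        then show ?thesis by (simp add: closure_complement open_Compl)
      qed
      then show ?thesis by simp
    qed
    have "UNIV \<subseteq> closure (\<Inter>\<G>)" using Baire[OF closed_UNIV Gc Gp] by blast
    then have "\<Inter>\<G> \<noteq> {}" by auto
    then obtain x where x: "x \<in> \<Inter>\<G>" by blast
    have "x \<notin> C"
    proof
      assume "x \<in> C"
      then have "- {x} \<in> \<G>" unfolding \<G>_def by blast
      then show False using x by blast
    qed
    then have "\<not> isCont F x" unfolding C_def by simp
    then obtain r s where rs: "r \<in> \<rat>" "s \<in> \<rat>" "r < s" "x \<in> EE F r s" using cover[OF dF] by blast
    then have "(r, s) \<in> RR" unfolding RR_def by simp
    then have "- closure (EE F r s) \<in> \<G>" unfolding \<G>_def by force
    then have "x \<notin> closure (EE F r s)" using x by blast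
    then show False using rs(4) closure_subset by blast
  qed
  then obtain r s where rs: "r < s" "interior (closure (EE F r s)) \<noteq> {}" by blast
  then obtain z where z: "z \<in> interior (closure (EE F r s))" by blast
  obtain \<rho> where \<rho>: "\<rho> > 0" "ball z \<rho> \<subseteq> interior (closure (EE F r s))"
    using open_contains_ball_eq[OF open_interior] z by blast
  have P: "{r<..<s} \<subseteq> F ` {a<..<b}" if ab: "a < b" "{a<..<b} \<subseteq> ball z \<rho>" for a b
  proof -
    have "{a<..<b} \<subseteq> closure (EE F r s)" using ab(2) \<rho>(2) interior_subset by blast
    moreover have "{a<..<b} \<noteq> {}" using ab(1) by simp
    ultimately have "{a<..<b} \<inter> closure (EE F r s) \<noteq> {}" by blast
    then have "{a<..<b} \<inter> EE F r s \<noteq> {}" using open_Int_closure_eq_empty[of "{a<..<b}" "EE F r s"] by simp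
    then obtain x where x: "a < x" "x < b" "x \<in> EE F r s" by auto
    define h where "h = min (x - a) (b - x)"
    have h: "h > 0" using x by (simp add: h_def)
    have "ball x h \<subseteq> {a<..<b}" by (auto simp: h_def dist_real_def)
    moreover have "{r<..<s} \<subseteq> F ` ball x h" using x(3) h unfolding EE_def by blast
    ultimately show ?thesis by blast
  qed
  show ?thesis using rs(1) \<rho>(1) P by blast
qed

definition Nb :: "real set \<Rightarrow> real set" where
  "Nb S = closure S - interior (closure S)"

lemma Nb_closed: "closed (Nb S)"
  unfolding Nb_def by (intro closed_Diff) auto

lemma Nb_interior: "interior (Nb S) = {}"
proof (rule ccontr)
  assume "interior (Nb S) \<noteq> {}"
  then obtain y where y: "y \<in> interior (Nb S)" by blast
  have "interior (Nb S) \<subseteq> closure S" using interior_subset[of "Nb S"] unfolding Nb_def by blast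
  then have "interior (Nb S) \<subseteq> interior (closure S)" by (rule interior_maximal) simp
  moreover have "interior (Nb S) \<inter> interior (closure S) = {}"
    using interior_subset[of "Nb S"] unfolding Nb_def by blast
  ultimately show False using y by blast
qed

lemma ivl_ball:
  fixes x a b h e :: real
  assumes "x - h \<le> a" "b \<le> x + h" "h < e"
  shows "{a<..<b} \<subseteq> ball x e"
proof
  fix t assume "t \<in> {a<..<b}"
  then have "a < t" "t < b" by auto
  then have "x - t < e" "t - x < e" using assms by linarith+
  then show "t \<in> ball x e" by (simp add: dist_real_def abs_less_iff)
qed

lemma good_point:
  assumes dF: "darboux F"
    and P: "\<forall>a b. a < b \<longrightarrow> {a<..<b} \<subseteq> ball z \<rho> \<longrightarrow> {r<..<s} \<subseteq> F ` {a<..<b}"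
    and rs: "r < s"
    and xJ: "x \<in> ball z \<rho>"
    and np: "\<forall>q\<in>\<rat>. x \<notin> Nb {y. q < F y}" and nm: "\<forall>q\<in>\<rat>. x \<notin> Nb {y. F y < q}"
  shows "QQ F r s x"
  unfolding QQ_def
proof (intro allI impI)
  fix v assume v1: "min r (F x) < v" and v2: "v < max s (F x)"
  obtain e0 where e0: "e0 > 0" "ball x e0 \<subseteq> ball z \<rho>"
    using open_contains_ball_eq[OF open_ball] xJ by blast
  have mid: "(r + s) / 2 \<in> F ` {a<..<b}" if "a < b" "{a<..<b} \<subseteq> ball z \<rho>" for a b
  proof -
    have "(r + s) / 2 \<in> {r<..<s}" using rs by simp
    then show ?thesis using P that by blast
  qed
  consider "r < v \<and> v < s" | "s \<le> v" | "v \<le> r" by linarith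
  then show "DD F x v"
  proof cases
    case 1
    show ?thesis unfolding DD_def
    proof (intro exI[of _ "e0/2"] conjI allI impI)
      show "0 < e0 / 2" using e0 by simp
      fix a b assume ab: "x - e0 / 2 \<le> a" "a < b" "b \<le> x + e0 / 2"
      have "{a<..<b} \<subseteq> ball x e0" using ivl_ball[OF ab(1) ab(3)] e0 by simp
      then have "{a<..<b} \<subseteq> ball z \<rho>" using e0(2) by blast
      then have "{r<..<s} \<subseteq> F ` {a<..<b}" using P ab(2) by blast
      then show "v \<in> F ` {a<..<b}" using 1 by auto
    qed
  next
    case 2
    have vF: "v < F x"
    proof (rule ccontr)
      assume "\<not> v < F x"
      then have "max s (F x) = s \<or> max s (F x) = F x" by (simp add: max_def)
      then show False using v2 2 \<open>\<not> v < F x\<close> by linarith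
    qed
    from Rats_dense_in_real[OF vF] obtain q where q0: "q \<in> \<rat>" and q1: "v < q \<and> q < F x" by (rule bexE)
    have q: "q \<in> \<rat>" "v < q" "q < F x" using q0 q1 by (simp_all only: simp_thms)
    have xA: "x \<in> {y. q < F y}" using q(3) q(2) by (simp only: mem_Collect_eq)
    have "x \<in> closure {y. q < F y}" using closure_subset xA by (rule subsetD)
    then have "x \<in> interior (closure {y. q < F y})" using np q(1) unfolding Nb_def by blast
    then obtain e1 where e1: "e1 > 0" "ball x e1 \<subseteq> closure {y. q < F y}"
      using open_contains_ball_eq[OF open_interior] interior_subset by (metis subset_trans)
    define h where "h = min e0 e1 / 2"
    show ?thesis unfolding DD_def
    proof (intro exI[of _ h] conjI allI impI)
      show "0 < h" using e0 e1 by (simp add: h_def)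
      fix a b assume ab: "x - h \<le> a" "a < b" "b \<le> x + h"
      have m0: "0 < min e0 e1" using e0(1) e1(1) by simp
      have hl: "h < min e0 e1" unfolding h_def using m0 by linarith
      have sub: "{a<..<b} \<subseteq> ball x (min e0 e1)" using ivl_ball[OF ab(1) ab(3) hl] .
      have b1: "ball x (min e0 e1) \<subseteq> ball x e0" "ball x (min e0 e1) \<subseteq> ball x e1"
        by (rule subset_ball, simp)+
      have s1: "{a<..<b} \<subseteq> ball z \<rho>" using sub b1(1) e0(2) by (meson order_trans)
      have s2: "{a<..<b} \<subseteq> closure {y. q < F y}" using sub b1(2) e1(2) by (meson order_trans)
      have mab: "(a + b) / 2 \<in> {a<..<b}" using ab(2) by simp
      then have "(a + b) / 2 \<in> closure {y. q < F y}" using s2 by (rule subsetD[rotated])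
      then have "{a<..<b} \<inter> closure {y. q < F y} \<noteq> {}" using mab by blast
      then have "{a<..<b} \<inter> {y. q < F y} \<noteq> {}"
        using open_Int_closure_eq_empty[of "{a<..<b}" "{y. q < F y}"] by simp
      then obtain w where w: "a < w" "w < b" "q < F w" by auto
      have "F w \<in> F ` {a<..<b}" using w by simp
      moreover have "(r + s) / 2 \<in> F ` {a<..<b}" using mid[OF ab(2) s1] .
      moreover have "(r + s) / 2 \<le> v" using rs 2 by (simp add: field_simps)
      moreover have "v \<le> F w" using w q by linarith
      ultimately show "v \<in> F ` {a<..<b}" using darboux_open_interval[OF dF] by blast
    qed
  next
    case 3
    have vF: "F x < v"
    proof (rule ccontr)
      assume "\<not> F x < v"
      then have "min r (F x) = r \<or> min r (F x) = F x" by (simp add: min_def)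
      then show False using v1 3 \<open>\<not> F x < v\<close> by linarith
    qed
    from Rats_dense_in_real[OF vF] obtain q where q0: "q \<in> \<rat>" and q1: "F x < q \<and> q < v" by (rule bexE)
    have q: "q \<in> \<rat>" "F x < q" "q < v" using q0 q1 by (simp_all only: simp_thms)
    have xA: "x \<in> {y. F y < q}" using q(3) q(2) by (simp only: mem_Collect_eq)
    have "x \<in> closure {y. F y < q}" using closure_subset xA by (rule subsetD)
    then have "x \<in> interior (closure {y. F y < q})" using nm q(1) unfolding Nb_def by blast
    then obtain e1 where e1: "e1 > 0" "ball x e1 \<subseteq> closure {y. F y < q}"
      using open_contains_ball_eq[OF open_interior] interior_subset by (metis subset_trans)
    define h where "h = min e0 e1 / 2"
    show ?thesis unfolding DD_def
    proof (intro exI[of _ h] conjI allI impI)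
      show "0 < h" using e0 e1 by (simp add: h_def)
      fix a b assume ab: "x - h \<le> a" "a < b" "b \<le> x + h"
      have m0: "0 < min e0 e1" using e0(1) e1(1) by simp
      have hl: "h < min e0 e1" unfolding h_def using m0 by linarith
      have sub: "{a<..<b} \<subseteq> ball x (min e0 e1)" using ivl_ball[OF ab(1) ab(3) hl] .
      have b1: "ball x (min e0 e1) \<subseteq> ball x e0" "ball x (min e0 e1) \<subseteq> ball x e1"
        by (rule subset_ball, simp)+
      have s1: "{a<..<b} \<subseteq> ball z \<rho>" using sub b1(1) e0(2) by (meson order_trans)
      have s2: "{a<..<b} \<subseteq> closure {y. F y < q}" using sub b1(2) e1(2) by (meson order_trans)
      have mab: "(a + b) / 2 \<in> {a<..<b}" using ab(2) by simp
      then have "(a + b) / 2 \<in> closure {y. F y < q}" using s2 by (rule subsetD[rotated])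
      then have "{a<..<b} \<inter> closure {y. F y < q} \<noteq> {}" using mab by blast
      then have "{a<..<b} \<inter> {y. F y < q} \<noteq> {}"
        using open_Int_closure_eq_empty[of "{a<..<b}" "{y. F y < q}"] by simp
      then obtain w where w: "a < w" "w < b" "F w < q" by auto
      have "F w \<in> F ` {a<..<b}" using w by simp
      moreover have "(r + s) / 2 \<in> F ` {a<..<b}" using mid[OF ab(2) s1] .
      moreover have "F w \<le> v" using w q by linarith
      moreover have "v \<le> (r + s) / 2" using rs 3 by (simp add: field_simps)
      ultimately show "v \<in> F ` {a<..<b}" using darboux_open_interval[OF dF] by blast
    qed
  qed
qed

theorem mainTheorem6:
  fixes F :: "real \<Rightarrow> real"
  assumes "darboux F"
    and "countable {x. isCont F x}"
  shows "\<exists>f :: real \<Rightarrow> real. continuous_on UNIV f \<and> (\<exists>a b. f a \<noteq> f b)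
           \<and> darboux (\<lambda>x. F x + f x)"
proof -
  note dF = assms(1)
  from window[OF assms(1) assms(2)] obtain r s z \<rho> where rs: "r < s" and \<rho>: "\<rho> > 0"
    and P: "\<forall>a b. a < b \<longrightarrow> {a<..<b} \<subseteq> ball z \<rho> \<longrightarrow> {r<..<s} \<subseteq> F ` {a<..<b}"
    by blast
  define \<G> where "\<G> = (\<lambda>q. - Nb {y. q < F y}) ` \<rat> \<union> (\<lambda>q. - Nb {y. F y < q}) ` \<rat> \<union> (\<lambda>q. - {q}) ` \<rat>"
  have Gc: "countable \<G>" unfolding \<G>_def by (intro countable_Un countable_image countable_rat)
  have G0mem: "- {0} \<in> \<G>" unfolding \<G>_def using Rats_0 by blast
  then have Gne: "\<G> \<noteq> {}" by blast
  have Gopen: "open T \<and> closure T = UNIV" if TG: "T \<in> \<G>" for T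
  proof -
    consider (p) q where "T = - Nb {y. q < F y}" | (m) q where "T = - Nb {y. F y < q}" | (s) q where "T = - {q}"
      using TG unfolding \<G>_def by blast
    then show ?thesis
    proof cases
      case p then show ?thesis using Nb_closed Nb_interior by (simp add: open_Compl closure_complement)
    next
      case m then show ?thesis using Nb_closed Nb_interior by (simp add: open_Compl closure_complement)
    next
      case s then show ?thesis by (simp add: open_Compl closure_complement)
    qed
  qed
  have Gp: "openin (top_of_set UNIV) T \<and> UNIV \<subseteq> closure T" if "T \<in> \<G>" for T
    using Gopen[OF that] by simp
  have dense: "UNIV \<subseteq> closure (\<Inter>\<G>)" using Baire[OF closed_UNIV Gc Gp] by blast
  have dense2: "\<exists>w. w \<in> \<Inter>\<G> \<and> a < w \<and> w < b" if ab: "a < b" for a b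
  proof -
    have mab: "(a + b) / 2 \<in> {a<..<b}" using ab by simp
    moreover have "(a + b) / 2 \<in> closure (\<Inter>\<G>)" using dense by blast
    ultimately have "{a<..<b} \<inter> closure (\<Inter>\<G>) \<noteq> {}" by blast
    then have "{a<..<b} \<inter> \<Inter>\<G> \<noteq> {}"
      using open_Int_closure_eq_empty[of "{a<..<b}" "\<Inter>\<G>"] by simp
    then show ?thesis by auto
  qed
  have ballI: "x \<in> ball z \<rho>" if "z - \<rho> < x" "x < z + \<rho>" for x
    using that by (simp add: ball_eq_greaterThanLessThan)
  obtain a0 where a0: "a0 \<in> \<Inter>\<G>" "z - \<rho> < a0" "a0 < z" using dense2[of "z - \<rho>" z] \<rho> by auto
  obtain b0 where b0: "b0 \<in> \<Inter>\<G>" "z < b0" "b0 < z + \<rho>" using dense2[of z "z + \<rho>"] \<rho> by auto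
  define G0 where "G0 = ball z \<rho> \<inter> \<Inter>\<G>"
  define U where "U = from_nat_into \<G>"
  have Uin: "U n \<in> \<G>" for n unfolding U_def using from_nat_into[OF Gne] .
  have Uopen: "\<forall>n. open (U n)" using Gopen Uin by blast
  have G0U: "\<forall>x\<in>G0. \<forall>n. x \<in> U n" using Uin unfolding G0_def by blast
  have G0dense: "\<forall>x y. a0 \<le> x \<longrightarrow> x < y \<longrightarrow> y \<le> b0 \<longrightarrow> (\<exists>w\<in>G0. x < w \<and> w < y)"
  proof (intro allI impI)
    fix x y assume xy: "a0 \<le> x" "x < y" "y \<le> b0"
    obtain w where w: "w \<in> \<Inter>\<G>" "x < w" "w < y" using dense2[OF xy(2)] by blast
    have "z - \<rho> < w" "w < z + \<rho>" using w xy a0 b0 by linarith+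
    then have "w \<in> ball z \<rho>" by (rule ballI)
    then show "\<exists>w\<in>G0. x < w \<and> w < y" using w unfolding G0_def by blast
  qed
  have a0b0: "a0 < b0" using a0 b0 by linarith
  have a0G: "a0 \<in> G0" unfolding G0_def using a0 ballI[of a0] \<rho> by auto
  have b0G: "b0 \<in> G0" unfolding G0_def using b0 ballI[of b0] \<rho> by auto
  from tree_result[OF Uopen G0U G0dense a0b0 a0G b0G]
  obtain fv :: "real \<Rightarrow> real" and K where fvc: "continuous_on UNIV fv"
    and fvb: "\<forall>x. 0 \<le> fv x \<and> fv x \<le> 1" and fvn: "\<exists>a b. fv a \<noteq> fv b" and Kc: "closed K"
    and KU: "\<forall>x\<in>K. (\<forall>n. x \<in> U n) \<and> a0 \<le> x \<and> x \<le> b0"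
    and Kconst0: "\<forall>a b. a \<le> b \<longrightarrow> {a<..<b} \<inter> K = {} \<longrightarrow> fv a = fv b"
    by blast
  have rangeU: "range U = \<G>" unfolding U_def using range_from_nat_into[OF Gne Gc] .
  have KG: "x \<in> \<Inter>\<G> \<and> x \<in> ball z \<rho>" if xK: "x \<in> K" for x
  proof
    have "\<forall>n. x \<in> U n" using KU xK by blast
    then show "x \<in> \<Inter>\<G>" using rangeU by blast
    have "a0 \<le> x" "x \<le> b0" using KU xK by blast+
    then have "z - \<rho> < x" "x < z + \<rho>" using a0 b0 by linarith+
    then show "x \<in> ball z \<rho>" by (rule ballI)
  qed
  have KQ: "\<forall>k\<in>K. QQ F r s k"
  proof
    fix k assume kK: "k \<in> K"
    have kG: "k \<in> \<Inter>\<G>" "k \<in> ball z \<rho>" using KG[OF kK] by blast+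
    have np: "\<forall>q\<in>\<rat>. k \<notin> Nb {y. q < F y}"
    proof
      fix q :: real assume "q \<in> \<rat>"
      then have "- Nb {y. q < F y} \<in> \<G>" unfolding \<G>_def by blast
      then show "k \<notin> Nb {y. q < F y}" using kG(1) by blast
    qed
    have nm: "\<forall>q\<in>\<rat>. k \<notin> Nb {y. F y < q}"
    proof
      fix q :: real assume "q \<in> \<rat>"
      then have "- Nb {y. F y < q} \<in> \<G>" unfolding \<G>_def by blast
      then show "k \<notin> Nb {y. F y < q}" using kG(1) by blast
    qed
    show "QQ F r s k" using good_point[OF dF P rs kG(2) np nm] .
  qed
  have Kirr: "k \<notin> \<rat>" if kK: "k \<in> K" for k
  proof
    assume "k \<in> \<rat>"
    then have "- {k} \<in> \<G>" unfolding \<G>_def by blast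
    then show False using KG[OF kK] by blast
  qed
  have Kgap: "\<forall>a b. a < b \<longrightarrow> (\<exists>w. a < w \<and> w < b \<and> w \<notin> K)"
  proof (intro allI impI)
    fix a b :: real assume "a < b"
    from Rats_dense_in_real[OF this] obtain w where w: "w \<in> \<rat>" and w2: "a < w \<and> w < b" by (rule bexE)
    have "w \<notin> K" using Kirr w by blast
    then show "\<exists>w. a < w \<and> w < b \<and> w \<notin> K" using w2 by blast
  qed
  define c where "c = (s - r) / 2"
  have c: "c > 0" using rs by (simp add: c_def)
  define f where "f = (\<lambda>x. c * fv x)"
  have cf: "continuous_on UNIV f" unfolding f_def using fvc by (intro continuous_intros)
  have osc: "\<forall>x y. \<bar>f x - f y\<bar> < s - r"
  proof (intro allI)
    fix x y
    have "\<bar>fv x - fv y\<bar> \<le> 1" using fvb[rule_format, of x] fvb[rule_format, of y] by (simp add: abs_le_iff)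
    then have "c * \<bar>fv x - fv y\<bar> \<le> c * 1" using c by (intro mult_left_mono) auto
    moreover have "\<bar>f x - f y\<bar> = c * \<bar>fv x - fv y\<bar>"
      unfolding f_def using c by (simp add: abs_mult right_diff_distrib[symmetric])
    moreover have "c < s - r" using rs by (simp add: c_def)
    ultimately show "\<bar>f x - f y\<bar> < s - r" by linarith
  qed
  have Kconst: "\<forall>a b. a \<le> b \<longrightarrow> {a<..<b} \<inter> K = {} \<longrightarrow> f a = f b"
    unfolding f_def using Kconst0 by simp
  have D: "darboux (\<lambda>x. F x + f x)" by (rule sum_darboux[OF dF cf osc Kc Kgap Kconst KQ])
  obtain a b where ab: "fv a \<noteq> fv b" using fvn by blast
  have "f a \<noteq> f b" unfolding f_def using ab c by simp
  then have nc: "\<exists>a b. f a \<noteq> f b" by blast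
  show ?thesis using cf nc D by blast
qed

end
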